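(* In $\mathbb{Z}[q,q^{-1}][[x,y]]$, \[ \sum_{i=1}^{\infty}q^i[i]!\,x^iy^i\prod_{j=0}^{i}\frac{1}{q^j-q^j[j+1]x+[j]xy}=\frac{-y}{q(1-x)}+\sum_{i\ge1}\frac{q^{-i^2-i-1}y^i(q^{2i+1}-y)}{q^i-q^i[i+1]x+[i]xy}. \]
   Context: $[m]=1+q+\dots+q^{m-1}$ for $m\ge0$ ($[0]=0$), $[i]!=\prod_{m=1}^i[m]$. Each fraction denotes the inverse of its denominator in $\mathbb{Z}[q,q^{-1}][[x,y]]$ (the denominators have invertible constant term $q^j$). *)

theory Defs
  imports "HOL-Computational_Algebra.Formal_Power_Series"
          "HOL-Computational_Algebra.Formal_Laurent_Series"
begin

text \<open>Coefficient ring: Z[q,q^-1] is embedded injectively into the field of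
  formal Laurent series rat fls in the variable q (q = fls_X).
  The ring R[[x,y]] is realised as (R[[x]])[[y]]: the inner fps variable is x,
  the outer fps variable is y.\<close>

type_synonym coef = "rat fls"
type_synonym ser2 = "coef fps fps"

definition qv :: coef where "qv = fls_X"

definition qint :: "nat \<Rightarrow> coef" where
  "qint m = (\<Sum>k<m. qv ^ k)"

definition qfact :: "nat \<Rightarrow> coef" where
  "qfact i = (\<Prod>m = 1..i. qint m)"

definition C :: "coef \<Rightarrow> ser2" where "C c = fps_const (fps_const c)"
definition X :: ser2 where "X = fps_const fps_X"
definition Y :: ser2 where "Y = fps_X"

definition den :: "nat \<Rightarrow> ser2" where
  "den j = C (qv ^ j) - C (qv ^ j * qint (j + 1)) * X + C (qint j) * X * Y"

definition lhs_term :: "nat \<Rightarrow> ser2" where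
  "lhs_term i = C (qv ^ i * qfact i) * X ^ i * Y ^ i * (\<Prod>j = 0..i. inverse (den j))"

definition rhs_term :: "nat \<Rightarrow> ser2" where
  "rhs_term i = C (inverse (qv ^ (i^2 + i + 1))) * Y ^ i * (C (qv ^ (2*i+1)) - Y)
                * inverse (den i)"

end

theory Submission imports Defs begin

lemma C_mult: "C (a * b) = C a * C b" by (simp add: C_def)
lemma C_add: "C (a + b) = C a + C b" by (simp add: C_def)
lemma C_diff: "C (a - b) = C a - C b" by (simp add: C_def)
lemma C_1: "C 1 = 1" by (simp add: C_def)
lemma C_0: "C 0 = 0" by (simp add: C_def)

lemma ser2_right_inv:
  fixes f :: ser2
  assumes "(f $ 0) $ 0 \<noteq> 0"
  shows "f * inverse f = 1"
proof -
  have "f $ 0 * inverse (f $ 0) = 1" using assms by (rule inverse_mult_eq_1')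
  then show ?thesis unfolding fps_inverse_def by (rule fps_right_inverse)
qed

lemma inv_unique:
  fixes f g :: ser2
  assumes "(f $ 0) $ 0 \<noteq> 0" "f * g = 1"
  shows "inverse f = g"
proof -
  have "inverse f = inverse f * (f * g)" using assms(2) by simp
  also have "\<dots> = (f * inverse f) * g" by (simp add: algebra_simps)
  also have "\<dots> = g" using ser2_right_inv[OF assms(1)] by simp
  finally show ?thesis .
qed

definition dd :: "nat \<Rightarrow> ser2" where "dd j = inverse (den j)"

lemma qv_nz: "qv \<noteq> 0" by (simp add: qv_def)

lemma den_00: "(den j $ 0) $ 0 = qv ^ j"
  by (simp add: den_def C_def X_def Y_def)

lemma den_dd: "den j * dd j = 1"
  unfolding dd_def by (rule ser2_right_inv) (simp add: den_00 qv_nz)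

lemma qint_Suc: "qint (Suc m) = qint m + qv ^ m"
  by (simp add: qint_def)

lemma qint_add: "qint (a + b) = qint a + qv ^ a * qint b"
  by (induction b) (simp_all add: qint_Suc qint_def[of 0] algebra_simps power_add)

lemma qfact_Suc: "qfact (Suc n) = qfact n * qint (Suc n)"
  by (simp add: qfact_def prod.cl_ivl_Suc)

lemma qfact_0: "qfact 0 = 1" by (simp add: qfact_def)

definition qq :: "int \<Rightarrow> coef" where "qq i = qv powi i"

lemma qq_add: "qq (a + b) = qq a * qq b"
  by (simp add: qq_def power_int_add qv_nz)
lemma qq_nat: "qv ^ n = qq (int n)" by (simp add: qq_def)
lemma qq_inv: "inverse (qv ^ n) = qq (- int n)" by (simp add: qq_def power_int_minus)


lemma L2: "den (m + k) - Y * C (qint m) * X = C (qv ^ m) * (den k - C (qv ^ (2*k+1) * qint m) * X)"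
proof -
  have e1: "qv ^ (m + k) = qv ^ m * qv ^ k" by (simp add: power_add)
  have qv2: "qv ^ (2*k+1) = qv ^ k * qv ^ k * qv" by (simp add: mult_2 power_add)
  have "qint (m + k + 1) = qint (k + 1) + qv ^ (k + 1) * qint m"
    using qint_add[of "k+1" m] by (simp add: ac_simps)
  then have e2: "qv ^ (m + k) * qint (m + k + 1) = qv ^ m * (qv ^ k * qint (k + 1)) + qv ^ m * (qv ^ (2*k+1) * qint m)"
    unfolding qv2 by (simp add: algebra_simps power_add)
  have e3: "qint (m + k) = qint m + qv ^ m * qint k" by (rule qint_add)
  show ?thesis
    unfolding den_def unfolding e2 unfolding e3 e1 C_mult C_add by (simp add: algebra_simps)
qed

definition T :: "nat \<Rightarrow> nat \<Rightarrow> ser2" where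
  "T N k = C (qq (- int (k^2+k+1)) * qfact (N - k)) * X ^ (N - k) * (\<Prod>j\<in>{k..N}. dd j)"

lemma L1: "k \<le> N \<Longrightarrow> T (Suc N) k = T N k * C (qint (Suc N - k)) * X * dd (Suc N)"
proof -
  assume k: "k \<le> N"
  have a: "Suc N - k = Suc (N - k)" using k by simp
  have b: "(\<Prod>j\<in>{k..Suc N}. dd j) = (\<Prod>j\<in>{k..N}. dd j) * dd (Suc N)"
    using k by (simp add: prod.cl_ivl_Suc)
  show ?thesis unfolding T_def a b qfact_Suc C_mult by (simp add: algebra_simps)
qed

lemma L3: "k < N \<Longrightarrow> T N k * den k = C (qq (2 * int k + 2) * qint (N - k)) * X * T N (Suc k)"
proof -
  assume k: "k < N"
  have a: "N - k = Suc (N - Suc k)" using k by simp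
  have b: "(\<Prod>j\<in>{k..N}. dd j) = dd k * (\<Prod>j\<in>{Suc k..N}. dd j)"
    using k by (simp add: prod.atLeast_Suc_atMost)
  have c: "qq (- int (k^2+k+1)) = qq (2 * int k + 2) * qq (- int ((Suc k)^2 + Suc k + 1))"
    unfolding qq_add[symmetric] by (simp add: power2_eq_square algebra_simps)
  have d: "dd k * den k = 1" using den_dd[of k] by (simp add: ac_simps)
  have "T N k * den k = C (qq (- int (k^2+k+1)) * qfact (N - k)) * X ^ (N - k) * (\<Prod>j\<in>{Suc k..N}. dd j) * (dd k * den k)"
    unfolding T_def b by (simp add: ac_simps)
  also have "\<dots> = C (qq (- int (k^2+k+1)) * qfact (N - k)) * X ^ (N - k) * (\<Prod>j\<in>{Suc k..N}. dd j)"
    using d by simp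
  also have "\<dots> = C (qq (2 * int k + 2) * qint (N - k)) * X * T N (Suc k)"
    unfolding T_def c a qfact_Suc C_mult by (simp add: algebra_simps)
  finally show ?thesis .
qed

lemma L4: "T N N * den N = C (qq (- int (N^2+N+1)))"
  unfolding T_def using den_dd[of N] by (simp add: qfact_0 ac_simps)


definition F :: "nat \<Rightarrow> nat \<Rightarrow> ser2" where
  "F N k = C (qq (int N + int k + 2) * qint (Suc N - k)) * X * T N k"

lemma term_gen: "k \<le> N \<Longrightarrow>
  T N k * (den (Suc N) - Y * C (qint (Suc N - k)) * X) = C (qv ^ (Suc N - k)) * (T N k * den k) - F N k"
proof -
  assume k: "k \<le> N"
  have s: "Suc N = (Suc N - k) + k" using k by simp
  have e: "qv ^ (Suc N - k) * (qv ^ (2 * k + 1) * qint (Suc N - k)) = qq (int N + int k + 2) * qint (Suc N - k)"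
  proof -
    have "qv ^ (Suc N - k) * qv ^ (2 * k + 1) = qq (int N + int k + 2)"
      unfolding qq_nat qq_add[symmetric] using k by (simp add: of_nat_diff ac_simps)
    then show ?thesis by (simp add: mult.assoc[symmetric])
  qed
  have "T N k * (den (Suc N) - Y * C (qint (Suc N - k)) * X)
      = T N k * (den ((Suc N - k) + k) - Y * C (qint (Suc N - k)) * X)" using s by simp
  also have "\<dots> = T N k * (C (qv ^ (Suc N - k)) * (den k - C (qv ^ (2*k+1) * qint (Suc N - k)) * X))"
    by (simp only: L2)
  also have "\<dots> = C (qv ^ (Suc N - k)) * (T N k * den k) - C (qv ^ (Suc N - k) * (qv ^ (2*k+1) * qint (Suc N - k))) * X * T N k"
    unfolding C_mult by (simp add: algebra_simps)
  also have "\<dots> = C (qv ^ (Suc N - k)) * (T N k * den k) - F N k"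
    unfolding e F_def ..
  finally show ?thesis .
qed

lemma term_lt: "k < N \<Longrightarrow>
  T N k * (den (Suc N) - Y * C (qint (Suc N - k)) * X) = F N (Suc k) - F N k"
proof -
  assume k: "k < N"
  have e: "qv ^ (Suc N - k) * (qq (2 * int k + 2) * qint (N - k)) = qq (int N + int (Suc k) + 2) * qint (Suc N - Suc k)"
  proof -
    have "qv ^ (Suc N - k) * qq (2 * int k + 2) = qq (int N + int (Suc k) + 2)"
      unfolding qq_nat qq_add[symmetric] using k by (simp add: of_nat_diff ac_simps)
    then show ?thesis by (simp add: mult.assoc[symmetric])
  qed
  have f: "C (qv ^ (Suc N - k)) * (C (qq (2 * int k + 2) * qint (N - k)) * X * T N (Suc k)) = F N (Suc k)"
    unfolding F_def e[symmetric] C_mult by (simp only: ac_simps)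
  show ?thesis
    unfolding term_gen[OF less_imp_le[OF k]] L3[OF k] f ..
qed

lemma term_N: "T N N * (den (Suc N) - Y * C (qint (Suc N - N)) * X) = C (qq (- int (N^2 + N))) - F N N"
proof -
  have e: "qv ^ (Suc N - N) * qq (- int (N^2+N+1)) = qq (- int (N^2 + N))"
    unfolding qq_nat qq_add[symmetric] by simp
  show ?thesis unfolding term_gen[OF order_refl] L4 C_mult[symmetric] e ..
qed

lemma star: "(\<Sum>k\<le>N. T N k * (den (Suc N) - Y * C (qint (Suc N - k)) * X)) = C (qq (- int (N^2 + N))) - F N 0"
proof -
  have "(\<Sum>k\<le>N. T N k * (den (Suc N) - Y * C (qint (Suc N - k)) * X))
     = (\<Sum>k<N. T N k * (den (Suc N) - Y * C (qint (Suc N - k)) * X)) + T N N * (den (Suc N) - Y * C (qint (Suc N - N)) * X)"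
    by (simp add: lessThan_Suc_atMost[symmetric])
  also have "(\<Sum>k<N. T N k * (den (Suc N) - Y * C (qint (Suc N - k)) * X)) = (\<Sum>k<N. F N (Suc k) - F N k)"
    by (rule sum.cong) (simp_all add: term_lt)
  also have "\<dots> = F N N - F N 0" by (rule sum_lessThan_telescope)
  finally show ?thesis unfolding term_N by simp
qed

lemma F0: "F N 0 = C (qv ^ Suc N * qfact (Suc N)) * X ^ Suc N * (\<Prod>j\<in>{0..N}. dd j)"
proof -
  have e: "qq (int N + 2) * qint (Suc N) * (qq (- 1) * qfact N) = qv ^ Suc N * qfact (Suc N)"
  proof -
    have "qq (int N + 2) * qq (- 1) = qv ^ Suc N" unfolding qq_nat qq_add[symmetric] by simp
    then show ?thesis by (simp add: qfact_Suc algebra_simps)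
  qed
  show ?thesis unfolding F_def T_def e[symmetric] C_mult by (simp add: algebra_simps)
qed


definition S :: "nat \<Rightarrow> ser2" where "S N = (\<Sum>k\<le>N. T N k)"

lemma S_Suc: "S (Suc N) = (\<Sum>k\<le>N. T N k * C (qint (Suc N - k)) * X) * dd (Suc N)
    + C (qq (- int ((Suc N)^2 + Suc N + 1))) * dd (Suc N)"
proof -
  have "S (Suc N) = (\<Sum>k\<le>N. T (Suc N) k) + T (Suc N) (Suc N)" unfolding S_def by simp
  also have "(\<Sum>k\<le>N. T (Suc N) k) = (\<Sum>k\<le>N. T N k * C (qint (Suc N - k)) * X * dd (Suc N))"
    by (rule sum.cong) (simp_all add: L1)
  also have "\<dots> = (\<Sum>k\<le>N. T N k * C (qint (Suc N - k)) * X) * dd (Suc N)"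
    by (simp add: sum_distrib_right)
  also have "T (Suc N) (Suc N) = C (qq (- int ((Suc N)^2 + Suc N + 1))) * dd (Suc N)"
    unfolding T_def by (simp add: qfact_0)
  finally show ?thesis .
qed

lemma lin: "(a::ser2) = b - c \<Longrightarrow> a = d - e \<Longrightarrow> c = b - d + e"
  by (simp add: algebra_simps)

lemma star2: "Y * (\<Sum>k\<le>N. T N k * C (qint (Suc N - k)) * X) = den (Suc N) * S N - C (qq (- int (N^2 + N))) + F N 0"
proof -
  have "(\<Sum>k\<le>N. T N k * (den (Suc N) - Y * C (qint (Suc N - k)) * X))
      = den (Suc N) * S N - Y * (\<Sum>k\<le>N. T N k * C (qint (Suc N - k)) * X)"
    unfolding S_def by (simp add: sum_subtractf sum_distrib_left algebra_simps)
  from lin[OF this star[of N]] show ?thesis .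
qed

lemma lhs_Suc: "lhs_term (Suc N) = Y ^ Suc N * dd (Suc N) * F N 0"
  unfolding lhs_term_def F0 dd_def[symmetric] by (simp add: prod.atLeast0_atMost_Suc algebra_simps)

lemma rhs_Suc: "rhs_term (Suc N) = Y ^ Suc N * dd (Suc N) * C (qq (- int (N^2 + N)))
   - Y ^ Suc (Suc N) * C (qq (- int ((Suc N)^2 + Suc N + 1))) * dd (Suc N)"
proof -
  have e: "inverse (qv ^ ((Suc N)^2 + Suc N + 1)) * qv ^ (2 * Suc N + 1) = qq (- int (N^2 + N))"
    unfolding qq_inv unfolding qq_nat unfolding qq_add[symmetric]
    by (rule arg_cong[where f=qq]) (simp add: power2_eq_square algebra_simps)
  have "rhs_term (Suc N) = Y ^ Suc N * dd (Suc N) * C (inverse (qv ^ ((Suc N)^2 + Suc N + 1)) * qv ^ (2 * Suc N + 1))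
     - Y ^ Suc (Suc N) * C (inverse (qv ^ ((Suc N)^2 + Suc N + 1))) * dd (Suc N)"
    unfolding rhs_term_def dd_def[symmetric] C_mult by (simp add: algebra_simps)
  then show ?thesis unfolding e unfolding qq_inv .
qed

lemma claim: "(\<Sum>i\<le>N. lhs_term i - rhs_term i) = Y ^ Suc N * S N"
proof (induction N)
  case 0
  have e: "C (inverse qv) * C qv = 1" unfolding C_mult[symmetric] by (simp add: qv_nz C_1)
  have "lhs_term 0 - rhs_term 0 = dd 0 - C (inverse qv) * (C qv - Y) * dd 0"
    unfolding lhs_term_def rhs_term_def dd_def by (simp add: qfact_0 C_1)
  also have "\<dots> = dd 0 - (C (inverse qv) * C qv) * dd 0 + Y * C (inverse qv) * dd 0"
    by (simp add: algebra_simps)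
  also have "\<dots> = Y * C (inverse qv) * dd 0" unfolding e by simp
  also have "\<dots> = Y ^ Suc 0 * S 0" unfolding S_def T_def qq_def by (simp add: qfact_0 power_int_minus)
  finally show ?case by simp
next
  case (Suc N)
  define \<sigma> where "\<sigma> = (\<Sum>k\<le>N. T N k * C (qint (Suc N - k)) * X)"
  define c0 where "c0 = C (qq (- int (N^2 + N)))"
  define c1 where "c1 = C (qq (- int ((Suc N)^2 + Suc N + 1)))"
  have dd1: "den (Suc N) * dd (Suc N) = 1" by (rule den_dd)
  have "(\<Sum>i\<le>Suc N. lhs_term i - rhs_term i) = Y ^ Suc N * S N + (lhs_term (Suc N) - rhs_term (Suc N))"
    using Suc.IH by simp
  also have "\<dots> = Y ^ Suc N * S N + Y ^ Suc N * dd (Suc N) * F N 0 - Y ^ Suc N * dd (Suc N) * c0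
      + Y ^ Suc (Suc N) * c1 * dd (Suc N)"
    unfolding lhs_Suc rhs_Suc c0_def c1_def by (simp add: algebra_simps)
  also have "\<dots> = Y ^ Suc N * dd (Suc N) * (den (Suc N) * S N - c0 + F N 0) + Y ^ Suc (Suc N) * c1 * dd (Suc N)"
    using dd1 by (simp add: algebra_simps)
  also have "\<dots> = Y ^ Suc N * dd (Suc N) * (Y * \<sigma>) + Y ^ Suc (Suc N) * c1 * dd (Suc N)"
    unfolding \<sigma>_def c0_def star2 ..
  also have "\<dots> = Y ^ Suc (Suc N) * S (Suc N)"
    unfolding S_Suc \<sigma>_def[symmetric] c1_def[symmetric] by (simp add: algebra_simps)
  finally show ?case .
qed


lemma base: "lhs_term 0 - rhs_term 0 = Y * C (inverse qv) * dd 0"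
proof -
  have e: "C (inverse qv) * C qv = 1" unfolding C_mult[symmetric] by (simp add: qv_nz C_1)
  have "lhs_term 0 - rhs_term 0 = dd 0 - C (inverse qv) * (C qv - Y) * dd 0"
    unfolding lhs_term_def rhs_term_def dd_def by (simp add: qfact_0 C_1)
  also have "\<dots> = dd 0 - (C (inverse qv) * C qv) * dd 0 + Y * C (inverse qv) * dd 0"
    by (simp add: algebra_simps)
  also have "\<dots> = Y * C (inverse qv) * dd 0" unfolding e by simp
  finally show ?thesis .
qed

lemma inv0: "inverse (C qv * (1 - X)) = C (inverse qv) * dd 0"
proof (rule inv_unique)
  show "((C qv * (1 - X)) $ 0) $ 0 \<noteq> 0" by (simp add: C_def X_def qv_nz)
  have d0: "den 0 = 1 - X" by (simp add: den_def qint_def C_1 C_0)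
  have e: "C qv * C (inverse qv) = 1" unfolding C_mult[symmetric] by (simp add: qv_nz C_1)
  have "C qv * (1 - X) * (C (inverse qv) * dd 0) = (C qv * C (inverse qv)) * (den 0 * dd 0)"
    unfolding d0 by (simp add: ac_simps)
  then show "C qv * (1 - X) * (C (inverse qv) * dd 0) = 1" unfolding e den_dd by simp
qed

lemma sums_ord:
  fixes f :: "nat \<Rightarrow> ser2"
  assumes "\<And>i n. n \<le> i \<Longrightarrow> f i $ n = 0"
  shows "f sums Abs_fps (\<lambda>n. \<Sum>i<n. f i $ n)"
  unfolding sums_def
proof (rule tendsto_fpsI)
  fix n
  show "\<forall>\<^sub>F N in sequentially. (\<Sum>i<N. f i) $ n = Abs_fps (\<lambda>n. \<Sum>i<n. f i $ n) $ n"
    unfolding eventually_sequentially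
  proof (intro exI allI impI)
    fix N assume "n \<le> N"
    then have "(\<Sum>i<N. f i $ n) = (\<Sum>i<n. f i $ n)"
      by (intro sum.mono_neutral_right) (auto simp: assms)
    then show "(\<Sum>i<N. f i) $ n = Abs_fps (\<lambda>n. \<Sum>i<n. f i $ n) $ n"
      by (simp add: fps_sum_nth)
  qed
qed

lemma Ypow_nth: "n \<le> i \<Longrightarrow> (Y ^ Suc i * g) $ n = 0"
  unfolding Y_def by (simp del: power_Suc add: fps_X_power_mult_nth)

lemma lhs_ord: "n \<le> i \<Longrightarrow> lhs_term (Suc i) $ n = 0"
proof -
  assume "n \<le> i"
  have "lhs_term (Suc i) = Y ^ Suc i * (C (qv ^ Suc i * qfact (Suc i)) * X ^ Suc i * (\<Prod>j = 0..Suc i. inverse (den j)))"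
    unfolding lhs_term_def by (simp only: ac_simps)
  then show ?thesis using Ypow_nth[OF \<open>n \<le> i\<close>] by simp
qed

lemma rhs_ord: "n \<le> i \<Longrightarrow> rhs_term (Suc i) $ n = 0"
proof -
  assume "n \<le> i"
  have "rhs_term (Suc i) = Y ^ Suc i * (C (inverse (qv ^ ((Suc i)^2 + Suc i + 1))) * (C (qv ^ (2*Suc i+1)) - Y) * inverse (den (Suc i)))"
    unfolding rhs_term_def by (simp only: ac_simps)
  then show ?thesis using Ypow_nth[OF \<open>n \<le> i\<close>] by simp
qed

theorem mainTheorem6:
  shows "summable (\<lambda>i. lhs_term (Suc i)) \<and> summable (\<lambda>i. rhs_term (Suc i)) \<and>
         (\<Sum>i. lhs_term (Suc i)) =
           - Y * inverse (C qv * (1 - X)) + (\<Sum>i. rhs_term (Suc i))"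
proof -
  define a where "a = (\<lambda>i. lhs_term (Suc i))"
  define b where "b = (\<lambda>i. rhs_term (Suc i))"
  have sa: "a sums Abs_fps (\<lambda>n. \<Sum>i<n. a i $ n)"
    by (rule sums_ord) (simp add: a_def lhs_ord)
  have sb: "b sums Abs_fps (\<lambda>n. \<Sum>i<n. b i $ n)"
    by (rule sums_ord) (simp add: b_def rhs_ord)
  have s1: "(\<lambda>i. a i - b i) sums Abs_fps (\<lambda>n. \<Sum>i<n. (a i - b i) $ n)"
    by (rule sums_ord) (simp add: a_def b_def lhs_ord rhs_ord)
  have ab: "suminf a - suminf b = Abs_fps (\<lambda>n. \<Sum>i<n. (a i - b i) $ n)"
    using sums_unique[OF sa] sums_unique[OF sb]
    by (simp add: fps_eq_iff sum_subtractf)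
  have ps: "(\<Sum>i<N. a i - b i) = Y ^ Suc N * S N - (lhs_term 0 - rhs_term 0)" for N
  proof -
    have "(\<Sum>i\<le>N. lhs_term i - rhs_term i) = (lhs_term 0 - rhs_term 0) + (\<Sum>i<N. lhs_term (Suc i) - rhs_term (Suc i))"
      unfolding lessThan_Suc_atMost[symmetric]
      by (rule sum.lessThan_Suc_shift)
    then show ?thesis using claim[of N] by (simp add: algebra_simps a_def b_def)
  qed
  have s2: "(\<lambda>i. a i - b i) sums (- (lhs_term 0 - rhs_term 0))"
    unfolding sums_def ps
  proof (rule tendsto_fpsI)
    fix n
    show "\<forall>\<^sub>F N in sequentially. (Y ^ Suc N * S N - (lhs_term 0 - rhs_term 0)) $ n = (- (lhs_term 0 - rhs_term 0)) $ n"
      unfolding eventually_sequentially using Ypow_nth by auto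
  qed
  have eq: "suminf a - suminf b = - (lhs_term 0 - rhs_term 0)"
    using sums_unique2[OF s1 s2] ab by simp
  have "suminf a = - Y * inverse (C qv * (1 - X)) + suminf b"
    using eq unfolding base inv0 by (simp add: algebra_simps)
  then show ?thesis using sa sb unfolding a_def b_def by (auto simp: sums_iff)
qed

end
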